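(* Let $(S,\circ)$ be a right loop and let $T$ be an invariant right subloop of $S$ with $|T|=2$ such that the quotient right loop $S/T$ is a group. Then the group torsion $G_S$ of $S$ is an elementary abelian $2$-group.
   Context: A right loop is a set $S$ with a binary operation $\circ$ having a two-sided identity $1$ such that for all $a,b\in S$ the equation $X\circ a=b$ has a unique solution $X\in S$. A right subloop is a nonempty subset that is a right loop under the induced operation. A congruence on $S$ is an equivalence relation on $S$ which is a right subloop of $S\times S$ (componentwise operation). An invariant right subloop $T$ of $S$ is the equivalence class of $1$ of some congruence $R$ on $S$; the quotient $S/T=\{T\circ x\mid x\in S\}$ (the set of $R$-classes, where $T\circ x=\{t\circ x: t\in T\}$) is a right loop with operation $(T\circ x)\circ(T\circ y)=T\circ(x\circ y)$. For $y,z\in S$, $f^S(y,z):S\to S$ is the bijection with $f^S(y,z)(x)$ the unique solution $X$ of $X\circ(y\circ z)=(x\circ y)\circ z$; the group torsion $G_S$ is the subgroup of $\mathrm{Sym}(S)$ generated by all $f^S(y,z)$, $y,z\in S$. *)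

theory Defs
  imports "HOL-Algebra.Algebra"
begin

definition right_loop :: "'a set \<Rightarrow> ('a \<Rightarrow> 'a \<Rightarrow> 'a) \<Rightarrow> 'a \<Rightarrow> bool" where
  "right_loop S mul e \<longleftrightarrow>
     e \<in> S \<and> (\<forall>a\<in>S. \<forall>b\<in>S. mul a b \<in> S) \<and>
     (\<forall>a\<in>S. mul e a = a \<and> mul a e = a) \<and>
     (\<forall>a\<in>S. \<forall>b\<in>S. \<exists>!x. x \<in> S \<and> mul x a = b)"

definition right_subloop :: "'a set \<Rightarrow> 'a set \<Rightarrow> ('a \<Rightarrow> 'a \<Rightarrow> 'a) \<Rightarrow> bool" where
  "right_subloop T S mul \<longleftrightarrow> T \<noteq> {} \<and> T \<subseteq> S \<and> (\<exists>e'. right_loop T mul e')"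

definition pair_op :: "('a \<Rightarrow> 'a \<Rightarrow> 'a) \<Rightarrow> 'a \<times> 'a \<Rightarrow> 'a \<times> 'a \<Rightarrow> 'a \<times> 'a" where
  "pair_op mul p q = (mul (fst p) (fst q), mul (snd p) (snd q))"

definition congruence_rl :: "'a set \<Rightarrow> ('a \<Rightarrow> 'a \<Rightarrow> 'a) \<Rightarrow> ('a \<times> 'a) set \<Rightarrow> bool" where
  "congruence_rl S mul R \<longleftrightarrow> equiv S R \<and> right_subloop R (S \<times> S) (pair_op mul)"

definition invariant_subloop :: "'a set \<Rightarrow> ('a \<Rightarrow> 'a \<Rightarrow> 'a) \<Rightarrow> 'a \<Rightarrow> 'a set \<Rightarrow> bool" where
  "invariant_subloop S mul e T \<longleftrightarrow> (\<exists>R. congruence_rl S mul R \<and> T = R `` {e})"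

definition rcoset_rl :: "('a \<Rightarrow> 'a \<Rightarrow> 'a) \<Rightarrow> 'a set \<Rightarrow> 'a \<Rightarrow> 'a set" where
  "rcoset_rl mul T x = (\<lambda>t. mul t x) ` T"

definition quotient_rl :: "'a set \<Rightarrow> ('a \<Rightarrow> 'a \<Rightarrow> 'a) \<Rightarrow> 'a \<Rightarrow> 'a set \<Rightarrow> 'a set monoid" where
  "quotient_rl S mul e T =
     \<lparr>carrier = rcoset_rl mul T ` S,
      monoid.mult = (\<lambda>A B. rcoset_rl mul T
                (mul (SOME x. x \<in> S \<and> A = rcoset_rl mul T x)
                    (SOME y. y \<in> S \<and> B = rcoset_rl mul T y))),
      one = rcoset_rl mul T e\<rparr>"

definition torsion_map :: "'a set \<Rightarrow> ('a \<Rightarrow> 'a \<Rightarrow> 'a) \<Rightarrow> 'a \<Rightarrow> 'a \<Rightarrow> 'a \<Rightarrow> 'a" where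
  "torsion_map S mul y z = (\<lambda>x \<in> S. THE u. u \<in> S \<and> mul u (mul y z) = mul (mul x y) z)"

definition group_torsion :: "'a set \<Rightarrow> ('a \<Rightarrow> 'a \<Rightarrow> 'a) \<Rightarrow> ('a \<Rightarrow> 'a) set" where
  "group_torsion S mul =
     generate (BijGroup S) {torsion_map S mul y z | y z. y \<in> S \<and> z \<in> S}"

definition elementary_abelian_2_group :: "('a, 'b) monoid_scheme \<Rightarrow> bool" where
  "elementary_abelian_2_group G \<longleftrightarrow>
     comm_group G \<and> (\<forall>g \<in> carrier G. g \<otimes>\<^bsub>G\<^esub> g = \<one>\<^bsub>G\<^esub>)"

end

theory Submission
  imports Defs
begin

locale rlctx =
  fixes S :: "'a set" and mul :: "'a \<Rightarrow> 'a \<Rightarrow> 'a" and e :: 'a and R :: "('a \<times> 'a) set"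
  assumes RL: "right_loop S mul e" and CG: "congruence_rl S mul R"
begin

lemma e_in: "e \<in> S" using RL by (simp add: right_loop_def)
lemma cl: "a \<in> S \<Longrightarrow> b \<in> S \<Longrightarrow> mul a b \<in> S" using RL by (simp add: right_loop_def)
lemma lid: "a \<in> S \<Longrightarrow> mul e a = a" using RL by (simp add: right_loop_def)
lemma rid: "a \<in> S \<Longrightarrow> mul a e = a" using RL by (simp add: right_loop_def)
lemma solv: "a \<in> S \<Longrightarrow> b \<in> S \<Longrightarrow> \<exists>!x. x \<in> S \<and> mul x a = b"
  using RL by (simp add: right_loop_def)
lemma canc: "x \<in> S \<Longrightarrow> y \<in> S \<Longrightarrow> a \<in> S \<Longrightarrow> mul x a = mul y a \<Longrightarrow> x = y"
  using solv[of a "mul y a"] cl by blast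

lemma eqv: "equiv S R" using CG by (simp add: congruence_rl_def)
lemma RS: "(a,b) \<in> R \<Longrightarrow> a \<in> S \<and> b \<in> S"
  using eqv by (auto simp: equiv_def refl_on_def)
lemma Rrefl: "a \<in> S \<Longrightarrow> (a,a) \<in> R"
  using eqv by (auto simp: equiv_def refl_on_def)
lemma Rsym: "(a,b) \<in> R \<Longrightarrow> (b,a) \<in> R"
  using eqv by (auto simp: equiv_def dest: symD)
lemma Rtrans: "(a,b) \<in> R \<Longrightarrow> (b,c) \<in> R \<Longrightarrow> (a,c) \<in> R"
  using eqv by (auto simp: equiv_def dest: transD)

lemma RL2: "\<exists>e'. right_loop R (pair_op mul) e'"
  using CG by (simp add: congruence_rl_def right_subloop_def)

lemma Rcl: "(a,a') \<in> R \<Longrightarrow> (b,b') \<in> R \<Longrightarrow> (mul a b, mul a' b') \<in> R"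
  using RL2 by (auto simp: right_loop_def pair_op_def) (metis fst_conv snd_conv)

lemma Rsolv: "p \<in> R \<Longrightarrow> q \<in> R \<Longrightarrow> \<exists>u \<in> R. pair_op mul u p = q"
  using RL2 unfolding right_loop_def by blast

lemma cancR: assumes "Xv \<in> S" "x \<in> S" "w \<in> S" "(mul Xv w, mul x w) \<in> R"
  shows "(Xv, x) \<in> R"
proof -
  obtain u where u: "u \<in> R" "pair_op mul u (w,w) = (mul Xv w, mul x w)"
    using Rsolv[OF Rrefl[OF assms(3)] assms(4)] by blast
  obtain u1 u2 where uu: "u = (u1,u2)" by (cases u)
  have "u1 \<in> S" "u2 \<in> S" using RS u(1) uu by auto
  moreover have "mul u1 w = mul Xv w" "mul u2 w = mul x w" using u(2) uu by (auto simp: pair_op_def)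
  ultimately have "u1 = Xv" "u2 = x" using canc assms by blast+
  thus ?thesis using u uu by simp
qed

definition "T = R `` {e}"
abbreviation "rc \<equiv> rcoset_rl mul T"

lemma eT: "e \<in> T" using Rrefl[OF e_in] by (simp add: T_def)

lemma rc_sub: assumes "(a,a') \<in> R" shows "rc a \<subseteq> rc a'"
proof
  fix x assume "x \<in> rc a"
  then obtain s where s: "(e,s) \<in> R" "x = mul s a" by (auto simp: rcoset_rl_def T_def)
  have "(mul s a, mul e a) \<in> R" using Rcl[OF Rsym[OF s(1)] assms[THEN RS, THEN conjunct1, THEN Rrefl]] by simp
  hence xa: "(x, a') \<in> R" using s assms lid RS Rtrans by metis
  have a'S: "a' \<in> S" using RS assms by blast
  obtain u where u: "u \<in> R" "pair_op mul u (a',a') = (x, a')"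
    using Rsolv[OF Rrefl[OF a'S] xa] by blast
  obtain u1 u2 where uu: "u = (u1,u2)" by (cases u)
  have "u1 \<in> S" "u2 \<in> S" using RS u(1) uu by auto
  moreover have "mul u1 a' = x" "mul u2 a' = mul e a'" using u(2) uu lid[OF a'S] by (auto simp: pair_op_def)
  ultimately have "u2 = e" using canc e_in a'S by blast
  hence "(e,u1) \<in> R" using u(1) uu Rsym by simp
  thus "x \<in> rc a'" using \<open>mul u1 a' = x\<close> by (auto simp: rcoset_rl_def T_def)
qed

lemma rc_eq: assumes "a \<in> S" "a' \<in> S" shows "rc a = rc a' \<longleftrightarrow> (a,a') \<in> R"
proof
  assume "rc a = rc a'"
  moreover have "a \<in> rc a" using eT lid[OF assms(1)] by (force simp: rcoset_rl_def)
  ultimately obtain s where s: "(e,s) \<in> R" "a = mul s a'" by (auto simp: rcoset_rl_def T_def)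
  have "(mul s a', mul e a') \<in> R" using Rcl[OF Rsym[OF s(1)] Rrefl[OF assms(2)]] .
  thus "(a,a') \<in> R" using s lid[OF assms(2)] by simp
next
  assume "(a,a') \<in> R" thus "rc a = rc a'" using rc_sub Rsym by blast
qed

definition "Q = quotient_rl S mul e T"

lemma Qmult: assumes "a \<in> S" "b \<in> S" shows "monoid.mult Q (rc a) (rc b) = rc (mul a b)"
proof -
  define x where "x = (SOME x. x \<in> S \<and> rc a = rc x)"
  define y where "y = (SOME y. y \<in> S \<and> rc b = rc y)"
  have x: "x \<in> S \<and> rc a = rc x" unfolding x_def by (rule someI[of _ a]) (simp add: assms)
  have y: "y \<in> S \<and> rc b = rc y" unfolding y_def by (rule someI[of _ b]) (simp add: assms)
  have "(x,a) \<in> R" "(y,b) \<in> R" using x y rc_eq assms Rsym by blast+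
  hence "(mul x y, mul a b) \<in> R" by (rule Rcl)
  hence "rc (mul x y) = rc (mul a b)" using rc_eq cl x y assms by blast
  thus ?thesis by (simp add: Q_def quotient_rl_def x_def y_def)
qed

lemma Qcarr: "a \<in> S \<Longrightarrow> rc a \<in> carrier Q" by (simp add: Q_def quotient_rl_def)

lemma assocR: assumes "monoid Q" "x \<in> S" "y \<in> S" "z \<in> S"
  shows "(mul (mul x y) z, mul x (mul y z)) \<in> R"
proof -
  have "monoid.mult Q (monoid.mult Q (rc x) (rc y)) (rc z) = monoid.mult Q (rc x) (monoid.mult Q (rc y) (rc z))"
    using monoid.m_assoc[OF assms(1) Qcarr Qcarr Qcarr] assms by blast
  hence "rc (mul (mul x y) z) = rc (mul x (mul y z))" using Qmult cl assms by simp
  thus ?thesis using rc_eq cl assms by simp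
qed

lemma tm_val: assumes "y \<in> S" "z \<in> S" "x \<in> S"
  shows "torsion_map S mul y z x \<in> S \<and> mul (torsion_map S mul y z x) (mul y z) = mul (mul x y) z"
proof -
  have "\<exists>!u. u \<in> S \<and> mul u (mul y z) = mul (mul x y) z" using solv cl assms by simp
  from theI'[OF this] show ?thesis using assms by (simp add: torsion_map_def)
qed

lemma tm_Bij: assumes "y \<in> S" "z \<in> S" shows "torsion_map S mul y z \<in> Bij S"
proof -
  let ?f = "torsion_map S mul y z"
  have ext: "?f \<in> extensional S" by (simp add: torsion_map_def)
  have inj: "inj_on ?f S"
  proof (rule inj_onI)
    fix a b assume ab: "a \<in> S" "b \<in> S" "?f a = ?f b"
    have "mul (mul a y) z = mul (?f a) (mul y z)" using tm_val[OF assms ab(1)] by simp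
    also have "\<dots> = mul (?f b) (mul y z)" using ab(3) by simp
    also have "\<dots> = mul (mul b y) z" using tm_val[OF assms ab(2)] by simp
    finally have "mul (mul a y) z = mul (mul b y) z" .
    hence "mul a y = mul b y" using canc cl assms ab by blast
    thus "a = b" using canc assms ab by blast
  qed
  have "?f ` S \<subseteq> S" using tm_val assms by auto
  moreover have "S \<subseteq> ?f ` S"
  proof
    fix Xv assume Xv: "Xv \<in> S"
    obtain u where u: "u \<in> S" "mul u z = mul Xv (mul y z)" using solv[of z "mul Xv (mul y z)"] cl Xv assms by blast
    obtain x where x: "x \<in> S" "mul x y = u" using solv[of y u] u assms by blast
    have fx: "?f x \<in> S" "mul (?f x) (mul y z) = mul (mul x y) z" using tm_val[OF assms x(1)] by auto
    have "mul (?f x) (mul y z) = mul Xv (mul y z)" using fx(2) x(2) u(2) by simp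
    hence "?f x = Xv" using canc[OF fx(1) Xv cl[OF assms]] by simp
    thus "Xv \<in> ?f ` S" using x by blast
  qed
  ultimately show ?thesis using ext inj by (auto simp: Bij_def bij_betw_def)
qed

lemma tm_R: assumes "monoid Q" "y \<in> S" "z \<in> S" "x \<in> S"
  shows "(torsion_map S mul y z x, x) \<in> R"
proof -
  have v: "torsion_map S mul y z x \<in> S" "mul (torsion_map S mul y z x) (mul y z) = mul (mul x y) z"
    using tm_val assms by auto
  show ?thesis using cancR[OF v(1) assms(4) cl[OF assms(2,3)]] v(2) assocR[OF assms(1) assms(4,2,3)] by simp
qed

definition "Hs = {f \<in> Bij S. \<forall>x\<in>S. (f x, x) \<in> R}"

lemma gen_H: assumes "monoid Q"
  shows "generate (BijGroup S) {torsion_map S mul y z | y z. y \<in> S \<and> z \<in> S} \<subseteq> Hs"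
proof
  fix f assume "f \<in> generate (BijGroup S) {torsion_map S mul y z | y z. y \<in> S \<and> z \<in> S}"
  thus "f \<in> Hs"
  proof induction
    case one
    have o: "\<one>\<^bsub>BijGroup S\<^esub> = (\<lambda>x\<in>S. x)" by (simp add: BijGroup_def)
    have "\<forall>x\<in>S. ((\<lambda>x\<in>S. x) x, x) \<in> R" using Rrefl by simp
    then show ?case unfolding o Hs_def using id_Bij[of S] by blast
  next
    case (incl h)
    then obtain y z where h: "h = torsion_map S mul y z" "y \<in> S" "z \<in> S" by blast
    have "\<forall>x\<in>S. (h x, x) \<in> R" using tm_R[OF assms h(2,3)] h(1) by blast
    then show ?case using tm_Bij[OF h(2,3)] h(1) unfolding Hs_def by blast
  next
    case (inv h)
    then obtain y z where h: "h = torsion_map S mul y z" "y \<in> S" "z \<in> S" by blast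
    have hB: "h \<in> Bij S" using tm_Bij[OF h(2,3)] h(1) by simp
    have "\<forall>x\<in>S. (inv_into S h x, x) \<in> R"
    proof
      fix x assume x: "x \<in> S"
      have bb: "bij_betw h S S" using hB by (simp add: Bij_def)
      have i: "inv_into S h x \<in> S" by (rule Bij_inv_into_mem[OF hB x])
      have "h (inv_into S h x) = x" using bb x by (simp add: bij_betw_inv_into_right)
      moreover have "(h (inv_into S h x), inv_into S h x) \<in> R" using tm_R[OF assms h(2,3) i] h by simp
      ultimately show "(inv_into S h x, x) \<in> R" using Rsym by metis
    qed
    hence A: "\<forall>x\<in>S. ((\<lambda>x\<in>S. inv_into S h x) x, x) \<in> R" by simp
    have "(\<lambda>x\<in>S. inv_into S h x) \<in> Hs" unfolding Hs_def using restrict_inv_into_Bij[OF hB] A by blast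
    moreover have "inv\<^bsub>BijGroup S\<^esub> h = (\<lambda>x\<in>S. inv_into S h x)" by (rule inv_BijGroup[OF hB])
    ultimately show ?case by (simp only:)
  next
    case (eng h1 h2)
    have b1: "h1 \<in> Bij S" and b2: "h2 \<in> Bij S" using eng.IH by (auto simp: Hs_def)
    have m: "h1 \<otimes>\<^bsub>BijGroup S\<^esub> h2 = compose S h1 h2" using b1 b2 by (simp add: BijGroup_def)
    have "\<forall>x\<in>S. (compose S h1 h2 x, x) \<in> R"
    proof
      fix x assume x: "x \<in> S"
      have r2: "(h2 x, x) \<in> R" using eng.IH(2) x by (simp add: Hs_def)
      have "h2 x \<in> S" using RS r2 by blast
      hence r1: "(h1 (h2 x), h2 x) \<in> R" using eng.IH(1) by (simp add: Hs_def)
      have "compose S h1 h2 x = h1 (h2 x)" using x by (simp add: compose_def)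
      thus "(compose S h1 h2 x, x) \<in> R" using Rtrans[OF r1 r2] by simp
    qed
    then show ?case using m compose_Bij[OF b1 b2] by (simp add: Hs_def)
  qed
qed

end

lemma two_class:
  assumes ctx: "rlctx S mul e R" and cT: "card (R `` {e}) = 2"
    and a: "(a,x) \<in> R" and b: "(b,x) \<in> R" and ax: "a \<noteq> x" and bx: "b \<noteq> x"
  shows "a = b"
proof -
  interpret rlctx S mul e R by (rule ctx)
  obtain p q where pq: "p \<noteq> q" "T = {p,q}" using cT T_def by (auto simp: card_2_iff)
  then obtain t where t: "T = {e,t}" using eT by auto
  have xS: "x \<in> S" using RS a by blast
  have "rc a = rc x" "rc b = rc x" using rc_eq a b RS by blast+
  moreover have "a \<in> rc a" "b \<in> rc b" using eT lid RS a b by (force simp: rcoset_rl_def)+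
  ultimately have "a \<in> {mul e x, mul t x}" "b \<in> {mul e x, mul t x}" using t by (auto simp: rcoset_rl_def)
  thus ?thesis using ax bx lid[OF xS] by auto
qed

theorem mainTheorem4:
  fixes S :: "'a set" and mul :: "'a \<Rightarrow> 'a \<Rightarrow> 'a" and e :: 'a and T :: "'a set"
  assumes "right_loop S mul e"
    and "invariant_subloop S mul e T"
    and "card T = 2"
    and "group (quotient_rl S mul e T)"
  shows "elementary_abelian_2_group
           ((BijGroup S)\<lparr>carrier := group_torsion S mul\<rparr>)"
proof -
  obtain R where R: "congruence_rl S mul R" "T = R `` {e}" using assms(2) by (auto simp: invariant_subloop_def)
  interpret rlctx S mul e R using assms(1) R(1) by unfold_locales
  have TT: "local.T = T" using R(2) by (simp add: local.T_def)
  have mQ: "monoid Q" using assms(4) TT by (simp add: Q_def group.is_monoid)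
  let ?gens = "{torsion_map S mul y z | y z. y \<in> S \<and> z \<in> S}"
  have gc: "?gens \<subseteq> carrier (BijGroup S)" using tm_Bij by (auto simp: BijGroup_def)
  have sg: "subgroup (group_torsion S mul) (BijGroup S)"
    unfolding group_torsion_def using group.generate_is_subgroup[OF group_BijGroup gc] .
  have gH: "group_torsion S mul \<subseteq> Hs" unfolding group_torsion_def using gen_H[OF mQ] .
  let ?G = "(BijGroup S)\<lparr>carrier := group_torsion S mul\<rparr>"
  have grp: "group ?G" using subgroup.subgroup_is_group[OF sg group_BijGroup] .
  have cT: "card (R `` {e}) = 2" using assms(3) R(2) by simp
  have two: "\<And>a b x. (a,x) \<in> R \<Longrightarrow> (b,x) \<in> R \<Longrightarrow> a \<noteq> x \<Longrightarrow> b \<noteq> x \<Longrightarrow> a = b"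
    by (rule two_class[OF rlctx.intro[OF assms(1) R(1)] cT])
  have inj: "\<And>f a b. f \<in> Hs \<Longrightarrow> a \<in> S \<Longrightarrow> b \<in> S \<Longrightarrow> f a = f b \<Longrightarrow> a = b"
    by (auto simp: Hs_def Bij_def bij_betw_def inj_on_def)
  have sq: "\<And>f x. f \<in> Hs \<Longrightarrow> x \<in> S \<Longrightarrow> f (f x) = x"
  proof -
    fix f x assume f: "f \<in> Hs" and x: "x \<in> S"
    have fx: "(f x, x) \<in> R" using f x by (simp add: Hs_def)
    show "f (f x) = x"
    proof (cases "f x = x")
      case False
      have fxS: "f x \<in> S" using RS fx by blast
      have "(f (f x), f x) \<in> R" using f fxS by (simp add: Hs_def)
      hence ffx: "(f (f x), x) \<in> R" using fx Rtrans by blast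
      have "f (f x) \<noteq> f x" using inj[OF f fxS x] False by blast
      show ?thesis
      proof (rule ccontr)
        assume "f (f x) \<noteq> x"
        hence "f (f x) = f x" using two[OF ffx fx _ False] by blast
        thus False using \<open>f (f x) \<noteq> f x\<close> by simp
      qed
    qed simp
  qed
  have cm: "\<And>f g x. f \<in> Hs \<Longrightarrow> g \<in> Hs \<Longrightarrow> x \<in> S \<Longrightarrow> f (g x) = g (f x)"
  proof -
    fix f g x assume f: "f \<in> Hs" and g: "g \<in> Hs" and x: "x \<in> S"
    have fx: "(f x, x) \<in> R" and gx: "(g x, x) \<in> R" using f g x by (auto simp: Hs_def)
    have fxS: "f x \<in> S" and gxS: "g x \<in> S" using RS fx gx by blast+
    show "f (g x) = g (f x)"
    proof (cases "f x = x"; cases "g x = x")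
      assume a: "f x = x" "g x \<noteq> x"
      have "(f (g x), x) \<in> R" using f gxS gx Rtrans by (auto simp: Hs_def)
      moreover have "f (g x) \<noteq> x" using inj[OF f gxS x] a by auto
      ultimately have "f (g x) = g x" using two gx a by blast
      thus ?thesis using a by simp
    next
      assume a: "f x \<noteq> x" "g x = x"
      have "(g (f x), x) \<in> R" using g fxS fx Rtrans by (auto simp: Hs_def)
      moreover have "g (f x) \<noteq> x" using inj[OF g fxS x] a by auto
      ultimately have "g (f x) = f x" using two fx a by blast
      thus ?thesis using a by simp
    next
      assume a: "f x \<noteq> x" "g x \<noteq> x"
      hence "f x = g x" using two fx gx by blast
      thus ?thesis using sq f g x by metis
    qed simp
  qed
  have comm: "comm_group ?G"
  proof (rule group.group_comm_groupI[OF grp])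
    fix f g assume "f \<in> carrier ?G" "g \<in> carrier ?G"
    hence fg: "f \<in> Hs" "g \<in> Hs" using gH by auto
    hence "f \<in> Bij S" "g \<in> Bij S" by (auto simp: Hs_def)
    thus "f \<otimes>\<^bsub>?G\<^esub> g = g \<otimes>\<^bsub>?G\<^esub> f" using cm[OF fg] by (auto simp: BijGroup_def compose_def)
  qed
  have "\<forall>g\<in>carrier ?G. g \<otimes>\<^bsub>?G\<^esub> g = \<one>\<^bsub>?G\<^esub>"
  proof
    fix g assume "g \<in> carrier ?G"
    hence g: "g \<in> Hs" using gH by auto
    hence "g \<in> Bij S" by (auto simp: Hs_def)
    thus "g \<otimes>\<^bsub>?G\<^esub> g = \<one>\<^bsub>?G\<^esub>" using sq[OF g] by (auto simp: BijGroup_def compose_def)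
  qed
  thus ?thesis using comm by (simp add: elementary_abelian_2_group_def)
qed

end
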